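(* Let there be $n$ buyers and $m$ datasets; buyer $i\in[n]$ has budget $b_i\in\mathbb{R}_{\ge0}$ and linear valuation $v_i(\mathbf{x})=\sum_{j=1}^m\tau_{i,j}x_j$ with $\tau_{i,j}\in\mathbb{R}_{\ge0}$. For $j\in[m]$ let $S_j=\{\tau_{i,j}:i\in[n]\}$. For each $j$ let $p_j:[0,1]\to\mathbb{R}_{\ge0}$ be a monotone lower-continuous pricing function (with $p_j(0)=0$), let $\hat p_j=\mathrm{disc}(\mathrm{conv}(p_j),S_j)$, and let $\mathbf{p}(\mathbf{x})=\sum_j p_j(x_j)$, $\hat{\mathbf{p}}(\mathbf{x})=\sum_j\hat p_j(x_j)$. Then $r(\hat{\mathbf{p}}\mid v_i,b_i)\ge r(\mathbf{p}\mid v_i,b_i)$ for every $i\in[n]$, and each $\hat p_j$ is monotone, continuous, convex and piecewise linear.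
   Context: Pricing function, $F$, $u^*$, $\mathrm{Dem}$ and revenue: a pricing function is a monotone $\mathbf{p}:[0,1]^m\to\mathbb{R}_{\ge0}$ with $\mathbf{p}(\mathbf{0})=0$; for valuation $v$ and budget $b\in\mathbb{R}_{\ge0}\cup\{\infty\}$, $F(\mathbf{p}\mid b)=\{\mathbf{x}:\mathbf{p}(\mathbf{x})\le b\}$, $u^*=\sup_{\mathbf{x}\in F}(v(\mathbf{x})-\mathbf{p}(\mathbf{x}))$, $\mathrm{Dem}(\mathbf{p}\mid v,b)=\{\mathbf{x}\in F: v(\mathbf{x})-\mathbf{p}(\mathbf{x})=u^*\}$, $r(\mathbf{p}\mid v,b)=\sup_{\mathbf{x}\in\mathrm{Dem}}\mathbf{p}(\mathbf{x})$. Lower-continuity of $f$ at $\hat x$: $f(\hat x)=\sup_{\delta>0}\inf_{|x-\hat x|\le\delta, x\in[0,1]}f(x)$. Convex hull of a function $f:[0,1]^m\to\mathbb{R}$: $\mathrm{conv}(f)(\mathbf{x})=\inf U_f(\mathbf{x})$, where $U_f(\mathbf{x})$ is the set of $y\in\mathbb{R}$ for which there exist $k\in\mathbb{N}$, $\lambda\in\Delta_k=\{\lambda\in[0,1]^k:\sum\lambda_i=1\}$, and $\mathbf{x}^{(1)},\dots,\mathbf{x}^{(k)}\in[0,1]^m$ with $\mathbf{x}=\sum_i\lambda_i\mathbf{x}^{(i)}$ and $y\ge\sum_i\lambda_if(\mathbf{x}^{(i)})$. For convex $f:[0,1]\to\mathbb{R}$, the left derivative is $f'(x)=\sup_{\delta\in(0,x]}(f(x)-f(x-\delta))/\delta$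 for $x\in(0,1]$ and $f'(0)=-\infty$; for $\beta\in\mathbb{R}$, $\ell(f\mid\beta)=\max\{x\in[0,1]:f'(x)\le\beta\}$. Piecewise-linear functions: for non-decreasing $\mathbf{z}\in[0,1]^{k-1}$ and $\boldsymbol\alpha\in\mathbb{R}^k$, with $z_0=0$, $\mathrm{plin}(\mathbf{z},\boldsymbol\alpha)$ is the function $f:[0,1]\to\mathbb{R}$ with $f(0)=0$ and, for $x>0$, $f(x)=\sum_{j=1}^{i-1}\alpha_j(z_j-z_{j-1})+\alpha_i(x-z_{i-1})$ where $i\in[k]$ is the largest index with $z_{i-1}<x$. Piecewise-linearization: for continuous convex $f:[0,1]\to\mathbb{R}$ and a finite set $S=\{\alpha_1<\dots<\alpha_k\}$, set $z_i=\ell(f\mid\alpha_i)$ for $i\in[k-1]$ and $\mathrm{disc}(f,S)=f(0)+\mathrm{plin}(\mathbf{z},\boldsymbol\alpha)$. *)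

theory Defs
  imports "HOL-Analysis.Analysis" "HOL-Library.Extended_Real"
begin

text \<open>Vectors in [0,1]^m are functions nat => real, with coordinates j < m in [0,1]
  and all other coordinates equal to 0.\<close>
definition cube :: "nat \<Rightarrow> (nat \<Rightarrow> real) set" where
  "cube m = {x. (\<forall>j<m. x j \<in> {0..1}) \<and> (\<forall>j\<ge>m. x j = 0)}"

definition feasible :: "((nat \<Rightarrow> real) \<Rightarrow> real) \<Rightarrow> nat \<Rightarrow> real \<Rightarrow> (nat \<Rightarrow> real) set" where
  "feasible P m b = {x \<in> cube m. P x \<le> b}"

definition ustar :: "((nat \<Rightarrow> real) \<Rightarrow> real) \<Rightarrow> ((nat \<Rightarrow> real) \<Rightarrow> real) \<Rightarrow> nat \<Rightarrow> real \<Rightarrow> real" where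
  "ustar P v m b = (SUP x\<in>feasible P m b. v x - P x)"

definition Dem :: "((nat \<Rightarrow> real) \<Rightarrow> real) \<Rightarrow> ((nat \<Rightarrow> real) \<Rightarrow> real) \<Rightarrow> nat \<Rightarrow> real \<Rightarrow> (nat \<Rightarrow> real) set" where
  "Dem P v m b = {x \<in> feasible P m b. v x - P x = ustar P v m b}"

definition revenue :: "((nat \<Rightarrow> real) \<Rightarrow> real) \<Rightarrow> ((nat \<Rightarrow> real) \<Rightarrow> real) \<Rightarrow> nat \<Rightarrow> real \<Rightarrow> real" where
  "revenue P v m b = (SUP x\<in>Dem P v m b. P x)"

definition lower_cont :: "(real \<Rightarrow> real) \<Rightarrow> bool" where
  "lower_cont f = (\<forall>xh\<in>{0..1}.
     f xh = (SUP \<delta>\<in>{0<..}. INF x\<in>{x\<in>{0..1}. \<bar>x - xh\<bar> \<le> \<delta>}. f x))"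

text \<open>Convex hull of a function on [0,1] (the case m = 1 of the general definition).\<close>
definition U_set :: "(real \<Rightarrow> real) \<Rightarrow> real \<Rightarrow> real set" where
  "U_set f x = {y. \<exists>(k::nat) (lam::nat \<Rightarrow> real) (xs::nat \<Rightarrow> real).
      (\<forall>i<k. lam i \<in> {0..1}) \<and> (\<Sum>i<k. lam i) = 1 \<and> (\<forall>i<k. xs i \<in> {0..1}) \<and>
      x = (\<Sum>i<k. lam i * xs i) \<and> y \<ge> (\<Sum>i<k. lam i * f (xs i))}"

definition convf :: "(real \<Rightarrow> real) \<Rightarrow> real \<Rightarrow> real" where
  "convf f x = Inf (U_set f x)"

definition lderiv :: "(real \<Rightarrow> real) \<Rightarrow> real \<Rightarrow> ereal" where
  "lderiv f x = (if x = 0 then -\<infinity> else (SUP \<delta>\<in>{0<..x}. ereal ((f x - f (x - \<delta>)) / \<delta>)))"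

definition ell :: "(real \<Rightarrow> real) \<Rightarrow> real \<Rightarrow> real" where
  "ell f \<beta> = (GREATEST x. x \<in> {0..1} \<and> lderiv f x \<le> ereal \<beta>)"

text \<open>plin(z, alpha) with k pieces: z 1..z (k-1) are the breakpoints (z 0 = 0 implicitly),
  alpha 1..alpha k are the slopes.\<close>
definition plin :: "nat \<Rightarrow> (nat \<Rightarrow> real) \<Rightarrow> (nat \<Rightarrow> real) \<Rightarrow> real \<Rightarrow> real" where
  "plin k z \<alpha> x = (if x = 0 then 0 else
     (let z' = (\<lambda>j. if j = 0 then 0 else z j);
          i = (GREATEST i. i \<in> {1..k} \<and> z' (i - 1) < x)
      in (\<Sum>j\<in>{1..<i}. \<alpha> j * (z' j - z' (j - 1))) + \<alpha> i * (x - z' (i - 1))))"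

text \<open>disc(f, S): alpha_i is the i-th smallest element of S, z_i = l(f | alpha_i) for i in [k-1].\<close>
definition disc :: "(real \<Rightarrow> real) \<Rightarrow> real set \<Rightarrow> real \<Rightarrow> real" where
  "disc f S x = f 0 + plin (card S)
      (\<lambda>i. ell f (sorted_list_of_set S ! (i - 1)))
      (\<lambda>i. sorted_list_of_set S ! (i - 1)) x"

definition piecewise_linear :: "(real \<Rightarrow> real) \<Rightarrow> bool" where
  "piecewise_linear f = (\<exists>k z \<alpha>. 1 \<le> k \<and> (\<forall>j\<in>{1..<k}. z j \<in> {0..1}) \<and>
      (\<forall>j1 j2. 1 \<le> j1 \<and> j1 \<le> j2 \<and> j2 < k \<longrightarrow> z j1 \<le> z j2) \<and>
      (\<forall>x\<in>{0..1}. f x = plin k z \<alpha> x))"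

end

theory Submission
  imports Defs
begin


definition zz :: "(nat \<Rightarrow> real) \<Rightarrow> nat \<Rightarrow> real" where
  "zz z j = (if j = 0 then 0 else z j)"
definition CC :: "(nat \<Rightarrow> real) \<Rightarrow> (nat \<Rightarrow> real) \<Rightarrow> nat \<Rightarrow> real" where
  "CC z \<alpha> i = (\<Sum>j\<in>{1..<i}. \<alpha> j * (zz z j - zz z (j - 1)))"
definition LL :: "(nat \<Rightarrow> real) \<Rightarrow> (nat \<Rightarrow> real) \<Rightarrow> nat \<Rightarrow> real \<Rightarrow> real" where
  "LL z \<alpha> i x = CC z \<alpha> i + \<alpha> i * (x - zz z (i - 1))"

lemma plin_eq: "x \<noteq> 0 \<Longrightarrow> plin k z \<alpha> x = LL z \<alpha> (GREATEST i. i \<in> {1..k} \<and> zz z (i - 1) < x) x"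
  unfolding plin_def LL_def CC_def zz_def Let_def by simp

lemma LL_affine: "LL z \<alpha> i y = LL z \<alpha> i x + \<alpha> i * (y - x)"
  unfolding LL_def by (simp add: algebra_simps)

lemma LL_step: "1 \<le> l \<Longrightarrow> LL z \<alpha> (Suc l) x - LL z \<alpha> l x = (\<alpha> (Suc l) - \<alpha> l) * (x - zz z l)"
  unfolding LL_def CC_def by (simp add: sum.atLeastLessThan_Suc algebra_simps)

lemma LL_chain:
  assumes amono: "\<forall>l. 1 \<le> l \<longrightarrow> Suc l \<le> k \<longrightarrow> \<alpha> l \<le> \<alpha> (Suc l)"
    and H1: "\<forall>l. 1 \<le> l \<longrightarrow> l < i \<longrightarrow> zz z l \<le> x"
    and H2: "\<forall>l. i \<le> l \<longrightarrow> Suc l < k + 1 \<longrightarrow> x \<le> zz z l"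
    and i: "1 \<le> i" "i \<le> k" and l: "l \<in> {1..k}"
  shows "LL z \<alpha> l x \<le> LL z \<alpha> i x"
proof -
  have down: "\<forall>d. d < i \<longrightarrow> LL z \<alpha> (i - d) x \<le> LL z \<alpha> i x"
  proof
    fix d show "d < i \<longrightarrow> LL z \<alpha> (i - d) x \<le> LL z \<alpha> i x"
    proof (induction d)
      case 0 then show ?case by simp
    next
      case (Suc d)
      show ?case
      proof
        assume "Suc d < i"
        define l where "l = i - Suc d"
        have l1: "1 \<le> l" "Suc l = i - d" "l < i" using \<open>Suc d < i\<close> unfolding l_def by auto
        have "\<alpha> l \<le> \<alpha> (Suc l)" using amono l1 i by auto
        moreover have "zz z l \<le> x" using H1 l1 by auto
        ultimately have "LL z \<alpha> l x \<le> LL z \<alpha> (Suc l) x"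
          using LL_step[OF l1(1), of z \<alpha> x] by (smt (verit) mult_nonneg_nonneg)
        then show "LL z \<alpha> (i - Suc d) x \<le> LL z \<alpha> i x"
          using Suc \<open>Suc d < i\<close> l1 unfolding l_def by auto
      qed
    qed
  qed
  have up: "\<forall>d. i + d \<le> k \<longrightarrow> LL z \<alpha> (i + d) x \<le> LL z \<alpha> i x"
  proof
    fix d show "i + d \<le> k \<longrightarrow> LL z \<alpha> (i + d) x \<le> LL z \<alpha> i x"
    proof (induction d)
      case 0 then show ?case by simp
    next
      case (Suc d)
      show ?case
      proof
        assume a: "i + Suc d \<le> k"
        define l where "l = i + d"
        have l1: "1 \<le> l" "Suc l \<le> k" "i \<le> l" using a i unfolding l_def by auto
        have "\<alpha> l \<le> \<alpha> (Suc l)" using amono l1 by auto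
        moreover have "x \<le> zz z l" using H2 l1 by auto
        ultimately have "LL z \<alpha> (Suc l) x \<le> LL z \<alpha> l x"
          using LL_step[OF l1(1), of z \<alpha> x] by (smt (verit) mult_nonneg_nonpos)
        then show "LL z \<alpha> (i + Suc d) x \<le> LL z \<alpha> i x"
          using Suc a unfolding l_def by auto
      qed
    qed
  qed
  show ?thesis
  proof (cases "l \<le> i")
    case True
    then show ?thesis using down[rule_format, of "i - l"] l by auto
  next
    case False
    then show ?thesis using up[rule_format, of "l - i"] l by auto
  qed
qed

locale plin_ok =
  fixes k :: nat and z \<alpha> :: "nat \<Rightarrow> real"
  assumes k1: "1 \<le> k"
    and zmono: "\<forall>a b. a \<le> b \<longrightarrow> b < k \<longrightarrow> zz z a \<le> zz z b"
    and amono: "\<forall>l. 1 \<le> l \<longrightarrow> Suc l \<le> k \<longrightarrow> \<alpha> l \<le> \<alpha> (Suc l)"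
begin

lemma zz_nonneg: "j < k \<Longrightarrow> 0 \<le> zz z j"
  using zmono[rule_format, of 0 j] by (simp add: zz_def)

lemma plin_max:
  assumes x: "0 \<le> x"
  shows "\<exists>i\<in>{1..k}. plin k z \<alpha> x = LL z \<alpha> i x \<and> (\<forall>l\<in>{1..k}. LL z \<alpha> l x \<le> LL z \<alpha> i x)"
proof (cases "x = 0")
  case True
  have "plin k z \<alpha> x = LL z \<alpha> 1 x" using True by (simp add: plin_def LL_def CC_def zz_def)
  moreover have "\<forall>l\<in>{1..k}. LL z \<alpha> l x \<le> LL z \<alpha> 1 x"
    using LL_chain[OF amono, of 1 z x] True zz_nonneg k1 by auto
  ultimately show ?thesis using k1 by auto
next
  case False
  define P where "P = (\<lambda>i. i \<in> {1..k} \<and> zz z (i - 1) < x)"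
  define i where "i = Greatest P"
  have P1: "P 1" using False x k1 by (simp add: P_def zz_def)
  have Pb: "\<And>y. P y \<Longrightarrow> y \<le> k" by (simp add: P_def)
  have Pi: "P i" unfolding i_def using GreatestI_nat[of P 1 k, OF P1 Pb] .
  have imax: "\<And>y. P y \<Longrightarrow> y \<le> i" unfolding i_def using Greatest_le_nat[of P _ k, OF _ Pb] by blast
  have eq: "plin k z \<alpha> x = LL z \<alpha> i x" using plin_eq[OF False] unfolding i_def P_def by simp
  have H1: "\<forall>l. 1 \<le> l \<longrightarrow> l < i \<longrightarrow> zz z l \<le> x"
  proof (intro allI impI)
    fix l assume "1 \<le> l" "l < i"
    then have "zz z l \<le> zz z (i - 1)" using zmono Pi by (auto simp: P_def)
    then show "zz z l \<le> x" using Pi by (auto simp: P_def)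
  qed
  have H2: "\<forall>l. i \<le> l \<longrightarrow> Suc l < k + 1 \<longrightarrow> x \<le> zz z l"
  proof (intro allI impI)
    fix l assume "i \<le> l" "Suc l < k + 1"
    show "x \<le> zz z l"
    proof (rule ccontr)
      assume "\<not> x \<le> zz z l"
      then have "P (Suc l)" using \<open>Suc l < k + 1\<close> by (auto simp: P_def)
      then show False using imax \<open>i \<le> l\<close> by fastforce
    qed
  qed
  have "\<forall>l\<in>{1..k}. LL z \<alpha> l x \<le> LL z \<alpha> i x"
    using LL_chain[OF amono H1 H2] Pi by (auto simp: P_def)
  then show ?thesis using eq Pi by (auto simp: P_def)
qed

lemma plin_lower: "0 \<le> x \<Longrightarrow> l \<in> {1..k} \<Longrightarrow> LL z \<alpha> l x \<le> plin k z \<alpha> x"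
  using plin_max by fastforce

lemma plin_at:
  assumes i: "i \<in> {1..k}" and x: "0 \<le> x" "zz z (i - 1) \<le> x" "i < k \<longrightarrow> x \<le> zz z i"
  shows "plin k z \<alpha> x = LL z \<alpha> i x"
proof -
  obtain i' where i': "i' \<in> {1..k}" "plin k z \<alpha> x = LL z \<alpha> i' x" using plin_max[OF x(1)] by blast
  have H1: "\<forall>l. 1 \<le> l \<longrightarrow> l < i \<longrightarrow> zz z l \<le> x"
  proof (intro allI impI)
    fix l assume a: "1 \<le> l" "l < i"
    have "zz z l \<le> zz z (i - 1)" using zmono a i by auto
    then show "zz z l \<le> x" using x by auto
  qed
  have H2: "\<forall>l. i \<le> l \<longrightarrow> Suc l < k + 1 \<longrightarrow> x \<le> zz z l"
  proof (intro allI impI)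
    fix l assume a: "i \<le> l" "Suc l < k + 1"
    then have "i < k" by auto
    then have "x \<le> zz z i" using x by auto
    also have "\<dots> \<le> zz z l" using zmono a by auto
    finally show "x \<le> zz z l" .
  qed
  have "LL z \<alpha> i' x \<le> LL z \<alpha> i x" using LL_chain[OF amono H1 H2] i i' by auto
  moreover have "LL z \<alpha> i x \<le> plin k z \<alpha> x" using plin_lower x i by auto
  ultimately show ?thesis using i' by auto
qed

end



lemma sum_split_add: "(\<Sum>i<a+b. g i) = (\<Sum>i<a. g i) + (\<Sum>i<b. g (a + i))" for g :: "nat \<Rightarrow> real"
  by (induction b) (auto simp: add_Suc_right)

lemma U_memI:
  fixes k :: nat and lam xs :: "nat \<Rightarrow> real"
  assumes "\<forall>i<k. lam i \<in> {0..1}" "(\<Sum>i<k. lam i) = 1" "\<forall>i<k. xs i \<in> {0..1}"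
    "x = (\<Sum>i<k. lam i * xs i)" "y \<ge> (\<Sum>i<k. lam i * f (xs i))"
  shows "y \<in> U_set f x"
  unfolding U_set_def using assms by blast

lemma U_self: "x \<in> {0..1} \<Longrightarrow> f x \<in> U_set f x"
  by (rule U_memI[of 1 "\<lambda>_. 1" "\<lambda>_. x"]) (auto simp: lessThan_Suc)

lemma U_lower:
  assumes aff: "\<forall>w\<in>{0..1}. a + b * w \<le> f w" and y: "y \<in> U_set f x"
  shows "a + b * x \<le> y"
proof -
  obtain k :: nat and lam xs :: "nat \<Rightarrow> real" where k: "\<forall>i<k. lam i \<in> {0..1}" "(\<Sum>i<k. lam i) = 1" "\<forall>i<k. xs i \<in> {0..1}"
      "x = (\<Sum>i<k. lam i * xs i)" "y \<ge> (\<Sum>i<k. lam i * f (xs i))"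
    using y unfolding U_set_def mem_Collect_eq by metis
  have "a + b * x = (\<Sum>i<k. lam i * (a + b * xs i))"
    using k(2,4) by (simp add: algebra_simps sum.distrib sum_distrib_left[symmetric] sum_distrib_right[symmetric])
  also have "\<dots> \<le> (\<Sum>i<k. lam i * f (xs i))"
    by (rule sum_mono) (use k aff in \<open>auto intro!: mult_left_mono\<close>)
  also have "\<dots> \<le> y" using k by simp
  finally show ?thesis .
qed

lemma convf_ge:
  assumes aff: "\<forall>w\<in>{0..1}. a + b * w \<le> f w" and x: "x \<in> {0..1}"
  shows "a + b * x \<le> convf f x"
  unfolding convf_def
  by (rule cInf_greatest) (use U_self[OF x] U_lower[OF aff] in auto)

lemma convf_greatest:
  assumes "x \<in> {0..1}" "\<And>y. y \<in> U_set f x \<Longrightarrow> z \<le> y"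
  shows "z \<le> convf f x"
  unfolding convf_def by (rule cInf_greatest) (use assms U_self in auto)

lemma convf_le:
  assumes aff: "\<forall>w\<in>{0..1}. a + b * w \<le> f w" and y: "y \<in> U_set f x"
  shows "convf f x \<le> y"
  unfolding convf_def
  by (rule cInf_lower[OF y]) (use U_lower[OF aff] in \<open>auto simp: bdd_below_def\<close>)

lemma sum_split_if:
  "(\<Sum>i<m+n. (if i < m then a i else b (i - m))) = (\<Sum>i<m. a i) + (\<Sum>i<n. b i)"
  for a b :: "nat \<Rightarrow> real"
  unfolding sum_split_add by (intro arg_cong2[where f="(+)"] sum.cong) auto

lemma U_comb:
  assumes y1: "y1 \<in> U_set f x1" and y2: "y2 \<in> U_set f x2" and t: "t \<in> {0..1}"
  shows "(1 - t) * y1 + t * y2 \<in> U_set f ((1 - t) * x1 + t * x2)"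
proof -
  obtain k1 :: nat and lam1 xs1 :: "nat \<Rightarrow> real" where k1: "\<forall>i<k1. lam1 i \<in> {0..1}" "(\<Sum>i<k1. lam1 i) = 1" "\<forall>i<k1. xs1 i \<in> {0..1}"
      "x1 = (\<Sum>i<k1. lam1 i * xs1 i)" "y1 \<ge> (\<Sum>i<k1. lam1 i * f (xs1 i))"
    using y1 unfolding U_set_def mem_Collect_eq by metis
  obtain k2 :: nat and lam2 xs2 :: "nat \<Rightarrow> real" where k2: "\<forall>i<k2. lam2 i \<in> {0..1}" "(\<Sum>i<k2. lam2 i) = 1" "\<forall>i<k2. xs2 i \<in> {0..1}"
      "x2 = (\<Sum>i<k2. lam2 i * xs2 i)" "y2 \<ge> (\<Sum>i<k2. lam2 i * f (xs2 i))"
    using y2 unfolding U_set_def mem_Collect_eq by metis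
  define lam where "lam i = (if i < k1 then (1 - t) * lam1 i else t * lam2 (i - k1))" for i
  define xs where "xs i = (if i < k1 then xs1 i else xs2 (i - k1))" for i
  have e1: "lam i * xs i = (if i < k1 then (1 - t) * (lam1 i * xs1 i) else t * (lam2 (i - k1) * xs2 (i - k1)))" for i
    unfolding lam_def xs_def by simp
  have e2: "lam i * f (xs i) = (if i < k1 then (1 - t) * (lam1 i * f (xs1 i)) else t * (lam2 (i - k1) * f (xs2 (i - k1))))" for i
    unfolding lam_def xs_def by simp
  show ?thesis
  proof (rule U_memI[of "k1 + k2" lam xs])
    show "\<forall>i<k1 + k2. lam i \<in> {0..1}"
    proof (intro allI impI)
      fix i assume i: "i < k1 + k2"
      show "lam i \<in> {0..1}"
      proof (cases "i < k1")
        case True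
        then show ?thesis using k1(1) t by (auto simp: lam_def intro: mult_le_one)
      next
        case False
        then have "i - k1 < k2" using i by auto
        then show ?thesis using False k2(1) t by (auto simp: lam_def intro: mult_le_one)
      qed
    qed
    show "(\<Sum>i<k1 + k2. lam i) = 1"
      using sum_split_if[where m=k1 and n=k2 and a="\<lambda>i. (1 - t) * lam1 i" and b="\<lambda>i. t * lam2 i"] k1(2) k2(2)
      unfolding lam_def by (simp add: sum_distrib_left[symmetric])
    show "\<forall>i<k1 + k2. xs i \<in> {0..1}"
    proof (intro allI impI)
      fix i assume i: "i < k1 + k2"
      show "xs i \<in> {0..1}"
      proof (cases "i < k1")
        case True
        then show ?thesis using k1(3) by (auto simp: xs_def)
      next
        case False
        then have "i - k1 < k2" using i by auto
        then show ?thesis using False k2(3) by (auto simp: xs_def)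
      qed
    qed
    show "(1 - t) * x1 + t * x2 = (\<Sum>i<k1 + k2. lam i * xs i)"
      using sum_split_if[where m=k1 and n=k2 and a="\<lambda>i. (1 - t) * (lam1 i * xs1 i)" and b="\<lambda>i. t * (lam2 i * xs2 i)"] k1(4) k2(4)
      unfolding e1 by (simp add: sum_distrib_left[symmetric])
    have "(\<Sum>i<k1 + k2. lam i * f (xs i)) = (1 - t) * (\<Sum>i<k1. lam1 i * f (xs1 i)) + t * (\<Sum>i<k2. lam2 i * f (xs2 i))"
      using sum_split_if[where m=k1 and n=k2 and a="\<lambda>i. (1 - t) * (lam1 i * f (xs1 i))" and b="\<lambda>i. t * (lam2 i * f (xs2 i))"]
      unfolding e2 by (simp add: sum_distrib_left[symmetric])
    also have "\<dots> \<le> (1 - t) * y1 + t * y2"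
      using k1(5) k2(5) t by (intro add_mono mult_left_mono) auto
    finally show "(\<Sum>i<k1 + k2. lam i * f (xs i)) \<le> (1 - t) * y1 + t * y2" .
  qed
qed

locale pfun =
  fixes p :: "real \<Rightarrow> real"
  assumes pmono: "mono_on {0..1} p" and p0: "p 0 = 0"
    and pnn: "\<forall>x\<in>{0..1}. 0 \<le> p x" and plc: "lower_cont p"
begin

abbreviation "c \<equiv> convf p"

lemma aff0: "\<forall>w\<in>{0..1}. 0 + 0 * w \<le> p w" using pnn by auto

lemma c_nonneg: "x \<in> {0..1} \<Longrightarrow> 0 \<le> c x"
  using convf_ge[OF aff0] by auto

lemma c_le_U: "y \<in> U_set p x \<Longrightarrow> c x \<le> y"
  using convf_le[OF aff0] by auto

lemma c_le_p: "x \<in> {0..1} \<Longrightarrow> c x \<le> p x"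
  using c_le_U U_self by auto

lemma c0: "c 0 = 0"
  using c_le_p[of 0] c_nonneg[of 0] p0 by auto

lemma c_le_lin: assumes x: "x \<in> {0..1}" shows "c x \<le> x * p 1"
proof -
  have "x * p 1 \<in> U_set p x"
    unfolding U_set_def mem_Collect_eq
    apply (rule exI[of _ "Suc (Suc 0)"], rule exI[of _ "\<lambda>i. if i = 0 then 1 - x else x"], rule exI[of _ "\<lambda>i. if i = 0 then 0 else 1"])
    using x p0 by (auto simp: less_Suc_eq)
  then show ?thesis by (rule c_le_U)
qed

lemma c_convex_ineq:
  assumes x1: "x1 \<in> {0..1}" and x2: "x2 \<in> {0..1}" and t: "0 < t" "t < 1"
  shows "c ((1 - t) * x1 + t * x2) \<le> (1 - t) * c x1 + t * c x2"
proof -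
  let ?x = "(1 - t) * x1 + t * x2"
  have main: "c ?x \<le> (1 - t) * y1 + t * y2" if "y1 \<in> U_set p x1" "y2 \<in> U_set p x2" for y1 y2
    using c_le_U[OF U_comb[OF that, of t]] t by auto
  have step1: "c ?x - t * y2 \<le> (1 - t) * c x1" if y2: "y2 \<in> U_set p x2" for y2
  proof -
    have "(c ?x - t * y2) / (1 - t) \<le> c x1"
    proof (rule convf_greatest[OF x1])
      fix y1 assume "y1 \<in> U_set p x1"
      then have "c ?x - t * y2 \<le> (1 - t) * y1" using main y2 by fastforce
      then show "(c ?x - t * y2) / (1 - t) \<le> y1" using t by (simp add: divide_le_eq mult.commute)
    qed
    then show ?thesis using t by (simp add: divide_le_eq mult.commute)
  qed
  have "(c ?x - (1 - t) * c x1) / t \<le> c x2"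
  proof (rule convf_greatest[OF x2])
    fix y2 assume "y2 \<in> U_set p x2"
    then have "c ?x - (1 - t) * c x1 \<le> t * y2" using step1 by fastforce
    then show "(c ?x - (1 - t) * c x1) / t \<le> y2" using t by (simp add: divide_le_eq mult.commute)
  qed
  then show ?thesis using t by (simp add: divide_le_eq mult.commute)
qed

lemma c_convex: "convex_on {0..1} c"
proof (rule convex_onI)
  fix t x y :: real assume a: "0 < t" "t < 1" "x \<in> {0..1}" "y \<in> {0..1}"
  show "c ((1 - t) *\<^sub>R x + t *\<^sub>R y) \<le> (1 - t) * c x + t * c y"
    using c_convex_ineq[OF a(3,4) a(1,2)] by simp
qed (rule convex_real_interval)

lemma lsc_eps:
  assumes xh: "xh \<in> {0..1}" and e: "0 < e"
  shows "\<exists>d>0. \<forall>x\<in>{0..1}. \<bar>x - xh\<bar> \<le> d \<longrightarrow> p xh - e < p x"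
proof -
  define g where "g d = (INF x\<in>{x\<in>{0..1}. \<bar>x - xh\<bar> \<le> d}. p x)" for d
  have eq: "p xh = (SUP d\<in>{0<..}. g d)" using plc xh unfolding lower_cont_def g_def by blast
  have bb: "bdd_below (p ` {x\<in>{0..1}. \<bar>x - xh\<bar> \<le> d})" for d
    by (rule bdd_belowI[where m=0]) (use pnn in auto)
  have gle: "g d \<le> p xh" if "d > 0" for d
    unfolding g_def by (rule cINF_lower[OF bb]) (use xh that in auto)
  have "p xh - e < (SUP d\<in>{0<..}. g d)" using eq e by simp
  then obtain d where d: "d \<in> {0<..}" "p xh - e < g d"
  proof -
    have bdd: "bdd_above (g ` {0<..})" by (rule bdd_aboveI[where M="p xh"]) (use gle in auto)
    have "\<exists>d\<in>{0<..}. p xh - e < g d"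
      using less_cSUP_iff[OF _ bdd, of "p xh - e"] \<open>p xh - e < (SUP d\<in>{0<..}. g d)\<close> by auto
    then show ?thesis using that by blast
  qed
  have "\<forall>x\<in>{0..1}. \<bar>x - xh\<bar> \<le> d \<longrightarrow> g d \<le> p x"
    unfolding g_def using bb by (auto intro!: cINF_lower)
  then show ?thesis using d by force
qed

lemma c_lower_near1:
  assumes y: "y \<in> {0..<1}" and x: "x \<in> {0..1}"
  shows "(1 - (1 - x) / (1 - y)) * p y \<le> c x"
proof -
  have aff: "\<forall>w\<in>{0..1}. p y * (1 - 1 / (1 - y)) + (p y / (1 - y)) * w \<le> p w"
  proof
    fix w :: real assume w: "w \<in> {0..1}"
    have py: "0 \<le> p y" using pnn y by auto
    have y1: "1 - y \<noteq> 0" using y by auto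
    have eq: "p y * (1 - 1 / (1 - y)) + (p y / (1 - y)) * w = p y * (1 - (1 - w) / (1 - y))"
      by (simp add: diff_divide_distrib algebra_simps)
    show "p y * (1 - 1 / (1 - y)) + (p y / (1 - y)) * w \<le> p w"
    proof (cases "y \<le> w")
      case True
      have "p y * (1 - (1 - w) / (1 - y)) \<le> p y"
        using py w y by (simp add: mult_left_le)
      also have "p y \<le> p w" using pmono True w y by (auto elim!: mono_onD)
      finally show ?thesis using eq by simp
    next
      case False
      then have "1 \<le> (1 - w) / (1 - y)" using y by (simp add: le_divide_eq)
      then have "p y * (1 - (1 - w) / (1 - y)) \<le> 0" using py by (simp add: mult_nonneg_nonpos)
      moreover have "0 \<le> p w" using pnn w by auto
      ultimately show ?thesis using eq by linarith
    qed
  qed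
  have "p y * (1 - 1 / (1 - y)) + (p y / (1 - y)) * x \<le> c x" by (rule convf_ge[OF aff x])
  moreover have "p y * (1 - 1 / (1 - y)) + (p y / (1 - y)) * x = (1 - (1 - x) / (1 - y)) * p y"
  proof -
    have "(1 - x) / (1 - y) = 1 / (1 - y) - x / (1 - y)" by (simp add: diff_divide_distrib)
    then show ?thesis by (simp add: algebra_simps add_divide_distrib[symmetric])
  qed
  ultimately show ?thesis by simp
qed

lemma c1: "c 1 = p 1"
proof -
  have E: "p 1 - e \<le> c 1" if e: "e > 0" for e
  proof -
    obtain d where d: "d > 0" "\<forall>x\<in>{0..1}. \<bar>x - 1\<bar> \<le> d \<longrightarrow> p 1 - e < p x"
      using lsc_eps[of 1 e] e by auto
    define y where "y = 1 - min d (1/2)"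
    have y: "y \<in> {0..<1}" using d unfolding y_def by auto
    have "p 1 - e < p y" using d y unfolding y_def by auto
    also have "p y \<le> c 1" using c_lower_near1[OF y, of 1] by simp
    finally show ?thesis by simp
  qed
  have "p 1 \<le> c 1"
  proof (rule ccontr)
    assume a: "\<not> p 1 \<le> c 1"
    then have "(p 1 - c 1) / 2 > 0" by simp
    from E[OF this] a show False by (auto simp: field_simps)
  qed
  then show ?thesis using c_le_p[of 1] by simp
qed

lemma c_cont: "continuous_on {0..1} c"
proof -
  have int: "continuous_on {0<..<1} c"
    by (rule convex_on_continuous) (auto intro: convex_on_subset[OF c_convex])
  have p1: "0 \<le> p 1" using pnn by auto
  show ?thesis
    unfolding continuous_on_eq_continuous_within
  proof
    fix x :: real assume x: "x \<in> {0..1}"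
    consider "x = 0" | "x = 1" | "x \<in> {0<..<1}" using x by fastforce
    then show "continuous (at x within {0..1}) c"
    proof cases
      case 1
      show ?thesis unfolding continuous_within_eps_delta
      proof (intro allI impI)
        fix e :: real assume e: "0 < e"
        show "\<exists>d>0. \<forall>x'\<in>{0..1}. dist x' x < d \<longrightarrow> dist (c x') (c x) < e"
        proof (intro exI[of _ "e / (p 1 + 1)"] conjI ballI impI)
          show "0 < e / (p 1 + 1)" using e p1 by simp
          fix x' :: real assume x': "x' \<in> {0..1}" "dist x' x < e / (p 1 + 1)"
          have "c x' \<le> x' * p 1" by (rule c_le_lin[OF x'(1)])
          also have "\<dots> \<le> x' * (p 1 + 1)" using x' by (intro mult_left_mono) auto
          also have "\<dots> < e" using x' 1 p1 by (simp add: dist_real_def less_divide_eq)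
          finally show "dist (c x') (c x) < e" using c_nonneg[OF x'(1)] 1 c0 by (simp add: dist_real_def)
        qed
      qed
    next
      case 2
      show ?thesis unfolding continuous_within_eps_delta
      proof (intro allI impI)
        fix e :: real assume e: "0 < e"
        obtain d where d: "d > 0" "\<forall>x\<in>{0..1}. \<bar>x - 1\<bar> \<le> d \<longrightarrow> p 1 - e / 2 < p x"
          using lsc_eps[of 1 "e/2"] e by auto
        define y where "y = 1 - min d (1/2)"
        have y: "y \<in> {0..<1}" using d unfolding y_def by auto
        have py: "p 1 - e / 2 < p y" "p y \<le> p 1" using d y pmono unfolding y_def
          by (auto elim!: mono_onD)
        define dd where "dd = (1 - y) * e / (2 * (p 1 + 1))"
        show "\<exists>d>0. \<forall>x'\<in>{0..1}. dist x' x < d \<longrightarrow> dist (c x') (c x) < e"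
        proof (intro exI[of _ dd] conjI ballI impI)
          show "0 < dd" using y e p1 unfolding dd_def by auto
          fix x' :: real assume x': "x' \<in> {0..1}" "dist x' x < dd"
          have up: "c x' \<le> p 1" using c_le_lin[OF x'(1)] x' p1 mult_left_le_one_le[of "p 1" x'] by auto
          have lo: "(1 - (1 - x') / (1 - y)) * p y \<le> c x'" by (rule c_lower_near1[OF y x'(1)])
          have "(1 - x') / (1 - y) * p y \<le> (1 - x') / (1 - y) * (p 1 + 1)"
            using py x' y by (intro mult_left_mono) auto
          also have "\<dots> \<le> e / 2"
          proof -
            have "1 - x' < dd" using x' 2 by (simp add: dist_real_def)
            then have "(1 - x') / (1 - y) \<le> e / (2 * (p 1 + 1))"
              using y unfolding dd_def by (simp add: divide_le_eq mult.commute)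
            then have "(1 - x') / (1 - y) * (p 1 + 1) \<le> e / (2 * (p 1 + 1)) * (p 1 + 1)"
              using p1 by (intro mult_right_mono) auto
            moreover have "e / (2 * (p 1 + 1)) * (p 1 + 1) = e / 2" using p1 by (simp add: field_simps)
            ultimately show ?thesis by linarith
          qed
          finally have A: "(1 - x') / (1 - y) * p y \<le> e / 2" .
          have "(1 - (1 - x') / (1 - y)) * p y = p y - (1 - x') / (1 - y) * p y"
            by (simp add: left_diff_distrib)
          then have "p y - e / 2 \<le> c x'" using A lo by linarith
          then have "p 1 - e < c x'" using py by simp
          then show "dist (c x') (c x) < e" using up 2 c1 e by (simp add: dist_real_def)
        qed
      qed
    next
      case 3
      then have "isCont c x" using int continuous_on_eq_continuous_at[of "{0<..<1}" c] by auto
      then show ?thesis by (simp add: continuous_at_imp_continuous_within)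
    qed
  qed
qed

end



lemma lderiv_le_iff:
  "x \<noteq> 0 \<Longrightarrow> (lderiv f x \<le> ereal \<beta>) \<longleftrightarrow> (\<forall>\<delta>\<in>{0<..x}. (f x - f (x - \<delta>)) / \<delta> \<le> \<beta>)"
  unfolding lderiv_def by (simp add: SUP_le_iff)

lemma lderiv_chord:
  assumes "0 \<le> a" "a < x" "lderiv f x \<le> ereal \<beta>"
  shows "f x - f a \<le> \<beta> * (x - a)"
proof -
  have "x \<noteq> 0" using assms by auto
  moreover have "x - a \<in> {0<..x}" using assms by auto
  ultimately have "(f x - f (x - (x - a))) / (x - a) \<le> \<beta>"
    using assms(3) lderiv_le_iff[of x f \<beta>] by blast
  then show ?thesis using assms by (simp add: divide_le_eq mult.commute)
qed

lemma lderiv_of_max: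
  assumes s: "s \<in> {0..1}" and mx: "\<forall>y\<in>{0..1}. \<tau> * y - f y \<le> \<tau> * s - f s"
  shows "lderiv f s \<le> ereal \<tau>"
proof (cases "s = 0")
  case True then show ?thesis by (simp add: lderiv_def)
next
  case False
  show ?thesis unfolding lderiv_le_iff[OF False]
  proof
    fix \<delta> assume d: "\<delta> \<in> {0<..s}"
    have "\<tau> * (s - \<delta>) - f (s - \<delta>) \<le> \<tau> * s - f s" using mx d s by auto
    then have "f s - f (s - \<delta>) \<le> \<tau> * \<delta>" by (simp add: algebra_simps)
    then show "(f s - f (s - \<delta>)) / \<delta> \<le> \<tau>" using d by (simp add: divide_le_eq mult.commute)
  qed
qed

lemma chord_tendsto:
  fixes f :: "real \<Rightarrow> real" and a b d :: "nat \<Rightarrow> real"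
  assumes f: "continuous_on {0..1} f" and a: "a \<longlonglongrightarrow> la" and b: "b \<longlonglongrightarrow> lb"
    and ab: "\<forall>n. a n \<in> {0..1} \<and> b n \<in> {0..1}" and la: "la \<in> {0..1}" and lb: "lb \<in> {0..1}"
    and d: "d \<longlonglongrightarrow> ld" and ld: "ld \<noteq> 0"
  shows "(\<lambda>n. (f (a n) - f (b n)) / d n) \<longlonglongrightarrow> (f la - f lb) / ld"
proof -
  have A: "(\<lambda>n. f (a n)) \<longlonglongrightarrow> f la"
    by (rule continuous_on_tendsto_compose[OF f a la]) (use ab in auto)
  have B: "(\<lambda>n. f (b n)) \<longlonglongrightarrow> f lb"
    by (rule continuous_on_tendsto_compose[OF f b lb]) (use ab in auto)
  show ?thesis using tendsto_divide[OF tendsto_diff[OF A B] d ld] .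
qed

lemma ell_closed:
  assumes f: "continuous_on {0..1} f"
  shows "closed {x\<in>{0..1}. lderiv f x \<le> ereal \<beta>}"
  unfolding closed_sequential_limits
proof (intro allI impI, elim conjE)
  fix xs :: "nat \<Rightarrow> real" and l
  assume xs: "\<forall>n. xs n \<in> {x \<in> {0..1}. lderiv f x \<le> ereal \<beta>}" and lim: "xs \<longlonglongrightarrow> l"
  have l01: "l \<in> {0..1}"
    using closed_sequential_limits[THEN iffD1, OF closed_atLeastAtMost[of 0 1]] xs lim by auto
  show "l \<in> {x \<in> {0..1}. lderiv f x \<le> ereal \<beta>}"
  proof (cases "l = 0")
    case True then show ?thesis by (simp add: lderiv_def)
  next
    case False
    then have lpos: "l > 0" using l01 by auto
    have inner: "(f l - f (l - \<delta>)) / \<delta> \<le> \<beta>" if d: "0 < \<delta>" "\<delta> < l" for \<delta>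
    proof -
      have ev: "eventually (\<lambda>n. \<delta> < xs n) sequentially"
        using lim d(2) by (rule order_tendstoD)
      have "eventually (\<lambda>n. (f (xs n) - f (xs n - \<delta>)) / \<delta> \<le> \<beta>) sequentially"
        using ev
      proof (rule eventually_mono)
        fix n assume "\<delta> < xs n"
        then have "xs n \<noteq> 0" "\<delta> \<in> {0<..xs n}" using d by auto
        then show "(f (xs n) - f (xs n - \<delta>)) / \<delta> \<le> \<beta>"
          using xs lderiv_le_iff[of "xs n" f \<beta>] by auto
      qed
      then obtain N where N: "\<forall>n\<ge>N. (f (xs n) - f (xs n - \<delta>)) / \<delta> \<le> \<beta>"
        by (auto simp: eventually_sequentially)
      obtain N2 where N2: "\<forall>n\<ge>N2. \<delta> < xs n" using ev by (auto simp: eventually_sequentially)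
      define ys where "ys n = xs (n + max N N2)" for n
      have ys: "ys \<longlonglongrightarrow> l" unfolding ys_def by (rule LIMSEQ_ignore_initial_segment[OF lim])
      have ysd: "\<forall>n. \<delta> < ys n" using N2 unfolding ys_def by auto
      have ys01: "\<forall>n. ys n \<in> {0..1}" using xs unfolding ys_def by auto
      have yd01: "\<forall>n. ys n - \<delta> \<in> {0..1}"
      proof
        fix n have "\<delta> < ys n" "ys n \<le> 1" using ysd ys01 by auto
        then show "ys n - \<delta> \<in> {0..1}" using d by auto
      qed
      have "(\<lambda>n. (f (ys n) - f (ys n - \<delta>)) / \<delta>) \<longlonglongrightarrow> (f l - f (l - \<delta>)) / \<delta>"
        by (rule chord_tendsto[OF f ys]) (use ys01 yd01 l01 d in \<open>auto intro!: tendsto_intros ys\<close>)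
      moreover have "\<forall>n. (f (ys n) - f (ys n - \<delta>)) / \<delta> \<le> \<beta>" using N unfolding ys_def by auto
      ultimately show ?thesis by (intro LIMSEQ_le_const2) auto
    qed
    have outer: "(f l - f (l - l)) / l \<le> \<beta>"
    proof -
      define u where "u n = l * inverse (real (Suc n)) / 2" for n
      have u: "u \<longlonglongrightarrow> 0" unfolding u_def
        using tendsto_divide[OF tendsto_mult[OF tendsto_const LIMSEQ_inverse_real_of_nat, of l] tendsto_const[of 2]] by simp
      have upos: "0 < u n" "u n \<le> l / 2" for n
      proof -
        show "0 < u n" using lpos unfolding u_def by simp
        have "inverse (real (Suc n)) \<le> 1" by (simp add: inverse_le_1_iff)
        then show "u n \<le> l / 2" using lpos unfolding u_def
          by (simp add: mult_left_le)
      qed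
      have u01: "\<forall>n. u n \<in> {0..1}" using upos l01 by (auto simp: less_imp_le) (smt (verit) upos(2))
      have d: "(\<lambda>n. l - u n) \<longlonglongrightarrow> l - 0" by (rule tendsto_diff[OF tendsto_const u])
      have "(\<lambda>n. (f l - f (u n)) / (l - u n)) \<longlonglongrightarrow> (f l - f 0) / (l - 0)"
        by (rule chord_tendsto[OF f tendsto_const u _ _ _ d]) (use l01 u01 lpos in auto)
      moreover have "\<forall>n. (f l - f (u n)) / (l - u n) \<le> \<beta>"
      proof
        fix n
        have "0 < l - u n" "l - u n < l" using upos[of n] lpos by auto
        from inner[OF this] show "(f l - f (u n)) / (l - u n) \<le> \<beta>" by simp
      qed
      ultimately show ?thesis by (intro LIMSEQ_le_const2) auto
    qed
    have "lderiv f l \<le> ereal \<beta>"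
      unfolding lderiv_le_iff[OF False]
    proof
      fix \<delta> assume "\<delta> \<in> {0<..l}"
      then show "(f l - f (l - \<delta>)) / \<delta> \<le> \<beta>"
        using inner outer by (cases "\<delta> = l") auto
    qed
    then show ?thesis using l01 by auto
  qed
qed

lemma ell_props:
  assumes f: "continuous_on {0..1} f"
  shows "ell f \<beta> \<in> {0..1} \<and> lderiv f (ell f \<beta>) \<le> ereal \<beta> \<and>
         (\<forall>x\<in>{0..1}. lderiv f x \<le> ereal \<beta> \<longrightarrow> x \<le> ell f \<beta>)"
proof -
  define A where "A = {x\<in>{0..1}. lderiv f x \<le> ereal \<beta>}"
  have A0: "0 \<in> A" unfolding A_def by (simp add: lderiv_def)
  have Ab: "bdd_above A" unfolding A_def by (rule bdd_aboveI[where M=1]) auto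
  have SA: "Sup A \<in> A" using closed_contains_Sup[of A] A0 Ab ell_closed[OF f] unfolding A_def by blast
  have SU: "\<And>y. y \<in> A \<Longrightarrow> y \<le> Sup A" using Ab by (simp add: cSup_upper)
  have "ell f \<beta> \<in> A \<and> (\<forall>y\<in>A. y \<le> ell f \<beta>)"
    unfolding ell_def
    by (rule GreatestI2_order[of _ "Sup A"]) (use SA SU in \<open>auto simp: A_def\<close>)
  then show ?thesis unfolding A_def by auto
qed



lemma BW_fin:
  fixes X :: "nat \<Rightarrow> nat \<Rightarrow> real"
  assumes "\<forall>n j. j < m \<longrightarrow> X n j \<in> {0..1}"
  shows "\<exists>r l. strict_mono r \<and> (\<forall>j<m. l j \<in> {0..1} \<and> (\<lambda>n. X (r n) j) \<longlonglongrightarrow> l j)"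
  using assms
proof (induction m)
  case 0
  show ?case by (rule exI[of _ id]) (auto simp: strict_mono_def)
next
  case (Suc m)
  then obtain r l where r: "strict_mono r" "\<forall>j<m. l j \<in> {0..1} \<and> (\<lambda>n. X (r n) j) \<longlonglongrightarrow> l j"
    by auto
  have "seq_compact {0..1::real}" by (rule compact_imp_seq_compact) simp
  moreover have "\<forall>n. X (r n) m \<in> {0..1}" using Suc.prems by auto
  ultimately obtain l' r' where l': "l' \<in> {0..1}" "strict_mono r'" "((\<lambda>n. X (r n) m) \<circ> r') \<longlonglongrightarrow> l'"
    by (rule seq_compactE)
  show ?case
  proof (intro exI conjI allI impI)
    show "strict_mono (r \<circ> r')" using strict_mono_o[OF r(1) l'(2)] .
    fix j assume j: "j < Suc m"
    show "(l(m := l')) j \<in> {0..1}" using j l' r by (cases "j = m") auto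
    show "(\<lambda>n. X ((r \<circ> r') n) j) \<longlonglongrightarrow> (l(m := l')) j"
    proof (cases "j = m")
      case True then show ?thesis using l'(3) by (simp add: o_def)
    next
      case False
      then have "j < m" using j by auto
      then have "(\<lambda>n. X (r n) j) \<longlonglongrightarrow> l j" using r by auto
      from LIMSEQ_subseq_LIMSEQ[OF this l'(2)] show ?thesis using False by (simp add: o_def)
    qed
  qed
qed

lemma zero_cube: "(\<lambda>_. 0) \<in> cube m" by (simp add: cube_def)

lemma ustar_bdd:
  assumes nn: "\<forall>j<m. \<forall>x\<in>{0..1}. 0 \<le> Q j x"
  shows "bdd_above ((\<lambda>x. (\<Sum>j<m. t j * x j) - (\<Sum>j<m. Q j (x j))) ` feasible (\<lambda>x. \<Sum>j<m. Q j (x j)) m b)"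
proof (rule bdd_aboveI[where M="\<Sum>j<m. \<bar>t j\<bar>"])
  fix y assume "y \<in> (\<lambda>x. (\<Sum>j<m. t j * x j) - (\<Sum>j<m. Q j (x j))) ` feasible (\<lambda>x. \<Sum>j<m. Q j (x j)) m b"
  then obtain x where x: "x \<in> cube m" "y = (\<Sum>j<m. t j * x j) - (\<Sum>j<m. Q j (x j))"
    by (auto simp: feasible_def)
  have "(\<Sum>j<m. t j * x j) \<le> (\<Sum>j<m. \<bar>t j\<bar>)"
  proof (rule sum_mono)
    fix j assume "j \<in> {..<m}"
    then have "x j \<in> {0..1}" using x by (auto simp: cube_def)
    then have "\<bar>t j * x j\<bar> \<le> \<bar>t j\<bar>" by (auto simp: abs_mult intro: mult_left_le)
    then show "t j * x j \<le> \<bar>t j\<bar>" by simp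
  qed
  moreover have "0 \<le> (\<Sum>j<m. Q j (x j))"
    using x nn by (auto simp: cube_def intro!: sum_nonneg)
  ultimately show "y \<le> (\<Sum>j<m. \<bar>t j\<bar>)" using x by simp
qed

lemma Dem_nonempty:
  fixes Q :: "nat \<Rightarrow> real \<Rightarrow> real" and t :: "nat \<Rightarrow> real"
  assumes lsc: "\<forall>j<m. \<forall>xh\<in>{0..1}. \<forall>e>0. \<exists>d>0. \<forall>x\<in>{0..1}. \<bar>x - xh\<bar> \<le> d \<longrightarrow> Q j xh - e < Q j x"
    and nn: "\<forall>j<m. \<forall>x\<in>{0..1}. 0 \<le> Q j x" and Q0: "\<forall>j<m. Q j 0 = 0" and b: "0 \<le> b"
  shows "Dem (\<lambda>x. \<Sum>j<m. Q j (x j)) (\<lambda>x. \<Sum>j<m. t j * x j) m b \<noteq> {}"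
proof -
  define P where "P x = (\<Sum>j<m. Q j (x j))" for x :: "nat \<Rightarrow> real"
  define V where "V x = (\<Sum>j<m. t j * x j)" for x :: "nat \<Rightarrow> real"
  define F where "F = feasible P m b"
  define u where "u = ustar P V m b"
  have u_def': "u = (SUP x\<in>F. V x - P x)" unfolding u_def ustar_def F_def ..
  have F0: "(\<lambda>_. 0) \<in> F" using Q0 b unfolding F_def feasible_def P_def by (simp add: zero_cube)
  have bdd: "bdd_above ((\<lambda>x. V x - P x) ` F)"
    using ustar_bdd[OF nn, of t b] unfolding F_def P_def V_def .
  have "\<forall>n. \<exists>x\<in>F. u - inverse (real (Suc n)) < V x - P x"
  proof
    fix n
    have "u - inverse (real (Suc n)) < u" by simp
    then show "\<exists>x\<in>F. u - inverse (real (Suc n)) < V x - P x"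
      unfolding u_def' using less_cSUP_iff[OF _ bdd] F0 by blast
  qed
  then obtain X where X: "\<forall>n. X n \<in> F" "\<forall>n. u - inverse (real (Suc n)) < V (X n) - P (X n)"
    by metis
  have Xc: "\<forall>n j. j < m \<longrightarrow> X n j \<in> {0..1}" using X(1) by (auto simp: F_def feasible_def cube_def)
  obtain r l where r: "strict_mono r" "\<forall>j<m. l j \<in> {0..1} \<and> (\<lambda>n. X (r n) j) \<longlonglongrightarrow> l j"
    using BW_fin[OF Xc] by auto
  define xs where "xs j = (if j < m then l j else 0)" for j
  define Y where "Y n = X (r n)" for n
  have xs_cube: "xs \<in> cube m" using r unfolding xs_def cube_def by auto
  have Ylim: "\<forall>j<m. (\<lambda>n. Y n j) \<longlonglongrightarrow> xs j" using r unfolding Y_def xs_def by auto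
  have YF: "\<forall>n. Y n \<in> F" using X unfolding Y_def by auto
  have Yc: "\<forall>n j. j < m \<longrightarrow> Y n j \<in> {0..1}" using Xc unfolding Y_def by auto
  have Yu: "\<forall>n. u - inverse (real (Suc n)) < V (Y n) - P (Y n)"
  proof
    fix n
    have "inverse (real (Suc (r n))) \<le> inverse (real (Suc n))"
      using seq_suble[OF r(1), of n] by (simp add: le_imp_inverse_le)
    moreover have "u - inverse (real (Suc (r n))) < V (X (r n)) - P (X (r n))" using X(2) by blast
    ultimately show "u - inverse (real (Suc n)) < V (Y n) - P (Y n)" unfolding Y_def by linarith
  qed
  have Pev: "eventually (\<lambda>n. P xs - e \<le> P (Y n)) sequentially" if e: "e > 0" for e
  proof -
    define e' where "e' = e / (real m + 1)"
    have e': "e' > 0" using e unfolding e'_def by simp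
    have "\<forall>j\<in>{..<m}. eventually (\<lambda>n. Q j (xs j) - e' < Q j (Y n j)) sequentially"
    proof
      fix j assume j: "j \<in> {..<m}"
      then have xj: "xs j \<in> {0..1}" using xs_cube by (auto simp: cube_def)
      obtain d where d: "d > 0" "\<forall>x\<in>{0..1}. \<bar>x - xs j\<bar> \<le> d \<longrightarrow> Q j (xs j) - e' < Q j x"
        using lsc j xj e' by blast
      have "eventually (\<lambda>n. dist (Y n j) (xs j) < d) sequentially"
        using Ylim j d(1) by (auto intro: tendstoD)
      then show "eventually (\<lambda>n. Q j (xs j) - e' < Q j (Y n j)) sequentially"
      proof (rule eventually_mono)
        fix n assume "dist (Y n j) (xs j) < d"
        then show "Q j (xs j) - e' < Q j (Y n j)" using d(2) Yc j by (auto simp: dist_real_def)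
      qed
    qed
    then have "eventually (\<lambda>n. \<forall>j\<in>{..<m}. Q j (xs j) - e' < Q j (Y n j)) sequentially"
      by (rule eventually_ball_finite[rotated]) simp
    then show ?thesis
    proof (rule eventually_mono)
      fix n assume a: "\<forall>j\<in>{..<m}. Q j (xs j) - e' < Q j (Y n j)"
      have "(\<Sum>j<m. Q j (xs j) - e') \<le> P (Y n)" unfolding P_def
        by (rule sum_mono) (use a in \<open>auto intro: less_imp_le\<close>)
      moreover have "(\<Sum>j<m. Q j (xs j) - e') = P xs - real m * e'"
        unfolding P_def by (simp add: sum_subtractf)
      moreover have "real m * e' \<le> e" using e unfolding e'_def by (simp add: field_simps)
      ultimately show "P xs - e \<le> P (Y n)" by linarith
    qed
  qed
  have Vlim: "(\<lambda>n. V (Y n)) \<longlonglongrightarrow> V xs"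
    unfolding V_def by (rule tendsto_sum) (use Ylim in \<open>auto intro!: tendsto_mult\<close>)
  have Pxs: "P xs \<le> b"
  proof (rule field_le_epsilon)
    fix e :: real assume e: "0 < e"
    obtain N where "\<forall>n\<ge>N. P xs - e \<le> P (Y n)" using Pev[OF e] by (auto simp: eventually_sequentially)
    moreover have "P (Y N) \<le> b" using YF unfolding F_def feasible_def by auto
    ultimately show "P xs \<le> b + e" by force
  qed
  then have xsF: "xs \<in> F" using xs_cube unfolding F_def feasible_def by auto
  have "u \<le> V xs - P xs"
  proof (rule field_le_epsilon)
    fix e :: real assume e: "0 < e"
    have e3: "e / 3 > 0" using e by simp
    have "eventually (\<lambda>n. P xs - e / 3 \<le> P (Y n)) sequentially" by (rule Pev[OF e3])
    moreover have "eventually (\<lambda>n. dist (V (Y n)) (V xs) < e / 3) sequentially"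
      by (rule tendstoD[OF Vlim e3])
    moreover have "eventually (\<lambda>n. inverse (real (Suc n)) < e / 3) sequentially"
      using order_tendstoD(2)[OF LIMSEQ_inverse_real_of_nat e3] .
    ultimately have "eventually (\<lambda>n. P xs - e / 3 \<le> P (Y n) \<and> dist (V (Y n)) (V xs) < e / 3 \<and>
        inverse (real (Suc n)) < e / 3) sequentially"
      by (intro eventually_conj)
    then obtain n where n: "P xs - e / 3 \<le> P (Y n)" "dist (V (Y n)) (V xs) < e / 3"
        "inverse (real (Suc n)) < e / 3"
      by (auto simp: eventually_sequentially)
    have "u - inverse (real (Suc n)) < V (Y n) - P (Y n)" using Yu by auto
    moreover have "V (Y n) < V xs + e / 3" using n(2) unfolding dist_real_def by linarith
    ultimately show "u \<le> V xs - P xs + e" using n(1,3) by linarith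
  qed
  moreover have "V xs - P xs \<le> u" unfolding u_def' by (rule cSUP_upper[OF xsF bdd])
  ultimately have "xs \<in> Dem P V m b" using xsF unfolding Dem_def F_def u_def by auto
  then show ?thesis unfolding P_def V_def by auto
qed



locale dset = pfun p for p +
  fixes S :: "real set"
  assumes finS: "finite S" and neS: "S \<noteq> {}" and Snn: "\<forall>a\<in>S. 0 \<le> a"
begin

definition "k = card S"
definition "al l = sorted_list_of_set S ! (l - 1)"
definition "zl l = ell c (al l)"

lemma ph_eq: "disc c S x = plin k zl al x"
  unfolding disc_def k_def zl_def al_def using c0 by simp

lemma k1: "1 \<le> k" using finS neS unfolding k_def by (simp add: Suc_le_eq card_gt_0_iff)

lemma len: "length (sorted_list_of_set S) = k" unfolding k_def by simp

lemma al_mono: "1 \<le> a \<Longrightarrow> a \<le> b \<Longrightarrow> b \<le> k \<Longrightarrow> al a \<le> al b"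
  unfolding al_def using len by (intro sorted_nth_mono) auto

lemma al_in: "l \<in> {1..k} \<Longrightarrow> al l \<in> S"
proof -
  assume l: "l \<in> {1..k}"
  then have "l - 1 < length (sorted_list_of_set S)" using len by auto
  then have "sorted_list_of_set S ! (l - 1) \<in> set (sorted_list_of_set S)" by (rule nth_mem)
  then show ?thesis using finS unfolding al_def by simp
qed

lemma al_nn: "l \<in> {1..k} \<Longrightarrow> 0 \<le> al l" using al_in Snn by auto

lemma al_surj: "\<tau> \<in> S \<Longrightarrow> \<exists>l\<in>{1..k}. al l = \<tau>"
proof -
  assume "\<tau> \<in> S"
  then have "\<tau> \<in> set (sorted_list_of_set S)" using finS by simp
  then obtain i where "i < k" "sorted_list_of_set S ! i = \<tau>" using len by (auto simp: in_set_conv_nth)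
  then show ?thesis by (intro bexI[of _ "Suc i"]) (auto simp: al_def)
qed

lemma zl_props: "zl l \<in> {0..1} \<and> lderiv c (zl l) \<le> ereal (al l) \<and>
    (\<forall>x\<in>{0..1}. lderiv c x \<le> ereal (al l) \<longrightarrow> x \<le> zl l)"
  unfolding zl_def by (rule ell_props[OF c_cont])

lemma zz01: "zz zl j \<in> {0..1}" using zl_props by (simp add: zz_def)

lemma zmono: "\<forall>a b. a \<le> b \<longrightarrow> b < k \<longrightarrow> zz zl a \<le> zz zl b"
proof (intro allI impI)
  fix a b :: nat assume ab: "a \<le> b" "b < k"
  show "zz zl a \<le> zz zl b"
  proof (cases "a = 0")
    case True then show ?thesis using zz01[of b] by (simp add: zz_def)
  next
    case False
    then have "al a \<le> al b" using ab by (intro al_mono) auto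
    then have "ereal (al a) \<le> ereal (al b)" by simp
    then have "lderiv c (zl a) \<le> ereal (al b)" using zl_props[of a] by (meson order_trans)
    then have "zl a \<le> zl b" using zl_props[of a] zl_props[of b] by auto
    then show ?thesis using False ab by (simp add: zz_def)
  qed
qed

lemma amono: "\<forall>l. 1 \<le> l \<longrightarrow> Suc l \<le> k \<longrightarrow> al l \<le> al (Suc l)"
  using al_mono by auto

sublocale pl: plin_ok k zl al
  using k1 zmono amono by unfold_locales auto

abbreviation "ph \<equiv> plin k zl al"

lemma ph_conv: "\<exists>i\<in>{1..k}. ph x = LL zl al i x \<and> (\<forall>l\<in>{1..k}. LL zl al l x \<le> ph x)" if "0 \<le> x"
  using pl.plin_max[OF that] by force

lemma ph_mono: "mono_on {0..1} ph"
proof (rule mono_onI)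
  fix x y :: real assume xy: "x \<in> {0..1}" "y \<in> {0..1}" "x \<le> y"
  obtain i where i: "i \<in> {1..k}" "ph x = LL zl al i x" using ph_conv[of x] xy by auto
  have "LL zl al i x \<le> LL zl al i y" using LL_affine[of zl al i y x] al_nn[OF i(1)] xy by simp
  also have "\<dots> \<le> ph y" using pl.plin_lower[of y i] i xy by auto
  finally show "ph x \<le> ph y" using i by simp
qed

lemma ph_convex: "convex_on {0..1} ph"
proof (rule convex_onI)
  fix t x y :: real assume a: "0 < t" "t < 1" "x \<in> {0..1}" "y \<in> {0..1}"
  let ?z = "(1 - t) * x + t * y"
  have z: "0 \<le> ?z" using a by auto
  obtain i where i: "i \<in> {1..k}" "ph ?z = LL zl al i ?z" using ph_conv[OF z] by auto
  have "LL zl al i ?z = (1 - t) * LL zl al i x + t * LL zl al i y"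
    unfolding LL_def by (simp add: algebra_simps)
  also have "\<dots> \<le> (1 - t) * ph x + t * ph y"
    using pl.plin_lower[of x i] pl.plin_lower[of y i] a i by (intro add_mono mult_left_mono) auto
  finally show "ph ((1 - t) *\<^sub>R x + t *\<^sub>R y) \<le> (1 - t) * ph x + t * ph y" using i by simp
qed (rule convex_real_interval)

lemma ph_lip: "x \<in> {0..1} \<Longrightarrow> y \<in> {0..1} \<Longrightarrow> ph x - ph y \<le> (\<Sum>i\<in>{1..k}. \<bar>al i\<bar>) * \<bar>x - y\<bar>"
proof -
  assume xy: "x \<in> {0..1}" "y \<in> {0..1}"
  obtain i where i: "i \<in> {1..k}" "ph x = LL zl al i x" using ph_conv[of x] xy by auto
  have "ph x - ph y \<le> LL zl al i x - LL zl al i y" using pl.plin_lower[of y i] i xy by auto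
  also have "\<dots> = al i * (x - y)" using LL_affine[of zl al i x y] by simp
  also have "\<dots> \<le> \<bar>al i\<bar> * \<bar>x - y\<bar>" by (metis abs_ge_self abs_mult)
  also have "\<dots> \<le> (\<Sum>i\<in>{1..k}. \<bar>al i\<bar>) * \<bar>x - y\<bar>"
    using i by (intro mult_right_mono member_le_sum) auto
  finally show ?thesis .
qed

lemma ph_cont: "continuous_on {0..1} ph"
proof (rule lipschitz_on_continuous_on)
  show "(\<Sum>i\<in>{1..k}. \<bar>al i\<bar>)-lipschitz_on {0..1} ph"
  proof (rule lipschitz_onI)
    fix x y :: real assume xy: "x \<in> {0..1}" "y \<in> {0..1}"
    show "dist (ph x) (ph y) \<le> (\<Sum>i\<in>{1..k}. \<bar>al i\<bar>) * dist x y"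
      using ph_lip[OF xy] ph_lip[OF xy(2,1)] by (simp add: dist_real_def abs_minus_commute)
  qed (auto intro: sum_nonneg)
qed

lemma ph_pl: "piecewise_linear ph"
  unfolding piecewise_linear_def
proof (intro exI conjI ballI allI impI)
  show "1 \<le> k" by (rule k1)
  fix j assume "j \<in> {1..<k}" then show "zl j \<in> {0..1}" using zl_props by auto
next
  fix j1 j2 :: nat assume "1 \<le> j1 \<and> j1 \<le> j2 \<and> j2 < k"
  then show "zl j1 \<le> zl j2" using zmono[rule_format, of j1 j2] by (simp add: zz_def)
qed simp

lemma ph0: "ph 0 = 0" by (simp add: plin_def)

lemma ph_nn: "x \<in> {0..1} \<Longrightarrow> 0 \<le> ph x"
  using mono_onD[OF ph_mono, of 0 x] ph0 by auto

lemma cz: "l' < k \<Longrightarrow> c (zz zl l') \<le> CC zl al (Suc l')"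
proof (induction l')
  case 0 then show ?case by (simp add: zz_def c0 CC_def)
next
  case (Suc l')
  have IH: "c (zz zl l') \<le> CC zl al (Suc l')" using Suc by auto
  have zle: "zz zl l' \<le> zl (Suc l')" using zmono[rule_format, of l' "Suc l'"] Suc.prems by (simp add: zz_def)
  have step: "c (zl (Suc l')) \<le> c (zz zl l') + al (Suc l') * (zl (Suc l') - zz zl l')"
  proof (cases "zz zl l' < zl (Suc l')")
    case True
    have "c (zl (Suc l')) - c (zz zl l') \<le> al (Suc l') * (zl (Suc l') - zz zl l')"
      by (rule lderiv_chord) (use True zz01 zl_props in auto)
    then show ?thesis by simp
  next
    case False
    then have "zz zl l' = zl (Suc l')" using zle by auto
    then show ?thesis by simp
  qed
  have "CC zl al (Suc (Suc l')) = CC zl al (Suc l') + al (Suc l') * (zz zl (Suc l') - zz zl l')"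
    unfolding CC_def by (simp add: sum.atLeastLessThan_Suc)
  then show ?case using IH step by (simp add: zz_def)
qed

lemma c_le_ph_z: "l' < k \<Longrightarrow> c (zz zl l') \<le> ph (zz zl l')"
proof -
  assume l': "l' < k"
  have "ph (zz zl l') = LL zl al (Suc l') (zz zl l')"
    by (rule pl.plin_at) (use l' zz01 zmono in auto)
  also have "\<dots> = CC zl al (Suc l')" by (simp add: LL_def)
  finally show ?thesis using cz[OF l'] by simp
qed

definition "tt l = (if l < k then zl l else 1)"

lemma tt01: "tt l \<in> {0..1}" using zl_props by (simp add: tt_def)

lemma P2:
  assumes l: "l \<in> {1..k}" and y: "y \<in> {0..1}"
  shows "al l * y - ph y \<le> al l * tt l - ph (tt l)"
proof -
  have "zz zl (l - 1) \<le> tt l"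
  proof (cases "l < k")
    case True
    then have "zz zl (l - 1) \<le> zz zl l" using zmono by auto
    then show ?thesis using True l by (simp add: tt_def zz_def)
  next
    case False then show ?thesis using zz01 by (simp add: tt_def)
  qed
  moreover have "l < k \<longrightarrow> tt l \<le> zz zl l" using l by (simp add: tt_def zz_def)
  ultimately have "ph (tt l) = LL zl al l (tt l)" using pl.plin_at[OF l] tt01 by auto
  moreover have "LL zl al l y \<le> ph y" using pl.plin_lower[OF _ l] y by auto
  moreover have "LL zl al l y = LL zl al l (tt l) + al l * (y - tt l)" by (rule LL_affine)
  ultimately show ?thesis by (simp add: algebra_simps)
qed

lemma P3:
  assumes l: "l \<in> {1..k}" and s: "s \<in> {0..1}"
    and mx: "\<forall>y\<in>{0..1}. al l * y - p y \<le> al l * s - p s"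
  shows "p s \<le> ph (tt l)"
proof -
  define \<tau> where "\<tau> = al l"
  define M where "M = \<tau> * s - p s"
  have tnn: "0 \<le> \<tau>" using al_nn[OF l] by (simp add: \<tau>_def)
  have cge: "\<tau> * y - M \<le> c y" if y: "y \<in> {0..1}" for y
  proof -
    have "\<forall>w\<in>{0..1}. - M + \<tau> * w \<le> p w" using mx unfolding M_def \<tau>_def by force
    from convf_ge[OF this y] show ?thesis by simp
  qed
  have cmax: "\<forall>y\<in>{0..1}. \<tau> * y - c y \<le> \<tau> * s - c s"
    using cge c_le_p[OF s] unfolding M_def by force
  have ld: "lderiv c s \<le> ereal \<tau>" by (rule lderiv_of_max[OF s cmax])
  show ?thesis
  proof (cases "l < k")
    case True
    have sz: "s \<le> zl l" using zl_props[of l] ld s unfolding \<tau>_def by auto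
    have "p s = \<tau> * s - M" unfolding M_def by simp
    also have "\<dots> \<le> \<tau> * s - (\<tau> * zl l - c (zl l))" using cge[of "zl l"] zl_props by auto
    also have "\<dots> \<le> c (zl l)" using sz tnn by (simp add: algebra_simps mult_left_mono)
    also have "\<dots> \<le> ph (zl l)" using c_le_ph_z[OF True] l by (simp add: zz_def)
    finally show ?thesis using True by (simp add: tt_def)
  next
    case False
    then have lk: "l = k" using l by auto
    define w where "w = zz zl (k - 1)"
    have w01: "w \<in> {0..1}" unfolding w_def by (rule zz01)
    have "p s = \<tau> * s - M" unfolding M_def by simp
    also have "\<dots> \<le> \<tau> * s - (\<tau> * w - c w)" using cge[OF w01] by auto
    also have "\<dots> \<le> c w + \<tau> * (1 - w)" using s tnn mult_left_mono[of s 1 \<tau>] by (simp add: algebra_simps)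
    also have "\<dots> \<le> ph w + \<tau> * (1 - w)" using c_le_ph_z[of "k - 1"] k1 unfolding w_def by simp
    also have "ph w = LL zl al k w" by (rule pl.plin_at) (use k1 w01 in \<open>auto simp: w_def\<close>)
    also have "LL zl al k w + \<tau> * (1 - w) = LL zl al k 1"
      using LL_affine[of zl al k 1 w] lk unfolding \<tau>_def by simp
    also have "\<dots> = ph 1" by (rule pl.plin_at[symmetric]) (use k1 zz01 in auto)
    finally show ?thesis using lk by (simp add: tt_def)
  qed
qed

lemma disc_eq: "disc c S = ph" using ph_eq by auto

lemma coord1: "mono_on {0..1} (disc c S) \<and> continuous_on {0..1} (disc c S) \<and>
    convex_on {0..1} (disc c S) \<and> piecewise_linear (disc c S)"
  unfolding disc_eq using ph_mono ph_cont ph_convex ph_pl by auto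

lemma coord0: "disc c S 0 = 0" "\<forall>x\<in>{0..1}. 0 \<le> disc c S x"
  unfolding disc_eq using ph0 ph_nn by auto

lemma coord2:
  assumes "\<tau> \<in> S"
  shows "\<exists>t\<in>{0..1}. (\<forall>y\<in>{0..1}. \<tau> * y - disc c S y \<le> \<tau> * t - disc c S t) \<and>
     (\<forall>s\<in>{0..1}. (\<forall>y\<in>{0..1}. \<tau> * y - p y \<le> \<tau> * s - p s) \<longrightarrow> p s \<le> disc c S t)"
proof -
  obtain l where l: "l \<in> {1..k}" "al l = \<tau>" using al_surj[OF assms] by auto
  show ?thesis unfolding disc_eq
    using tt01[of l] P2[OF l(1)] P3[OF l(1)] l(2) by blast
qed

end



lemma sum_upd:
  fixes g :: "nat \<Rightarrow> real \<Rightarrow> real"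
  assumes j: "j < m"
  shows "(\<Sum>j'<m. g j' ((x(j := y)) j')) = (\<Sum>j'<m. g j' (x j')) - g j (x j) + g j y"
proof -
  have 1: "(\<Sum>j'<m. g j' ((x(j := y)) j')) = g j y + (\<Sum>j'\<in>{..<m} - {j}. g j' ((x(j := y)) j'))"
    using sum.remove[of "{..<m}" j "\<lambda>j'. g j' ((x(j := y)) j')"] j by simp
  have 2: "(\<Sum>j'\<in>{..<m} - {j}. g j' ((x(j := y)) j')) = (\<Sum>j'\<in>{..<m} - {j}. g j' (x j'))"
    by (rule sum.cong) auto
  have 3: "(\<Sum>j'<m. g j' (x j')) = g j (x j) + (\<Sum>j'\<in>{..<m} - {j}. g j' (x j'))"
    using sum.remove[of "{..<m}" j "\<lambda>j'. g j' (x j')"] j by simp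
  show ?thesis using 1 2 3 by linarith
qed

lemma Dem_coord:
  fixes Q :: "nat \<Rightarrow> real \<Rightarrow> real" and t :: "nat \<Rightarrow> real"
  assumes x: "x \<in> Dem (\<lambda>x. \<Sum>j<m. Q j (x j)) (\<lambda>x. \<Sum>j<m. t j * x j) m b"
    and j: "j < m" and y: "y \<in> {0..1}"
    and Qy: "(\<Sum>j<m. Q j (x j)) - Q j (x j) + Q j y \<le> b"
    and nn: "\<forall>j<m. \<forall>x\<in>{0..1}. 0 \<le> Q j x"
  shows "t j * y - Q j y \<le> t j * x j - Q j (x j)"
proof -
  define x' where "x' = x(j := y)"
  have xc: "x \<in> cube m" using x by (auto simp: Dem_def feasible_def)
  have x'c: "x' \<in> cube m" using xc y j unfolding x'_def cube_def by auto
  have P': "(\<Sum>j<m. Q j (x' j)) = (\<Sum>j<m. Q j (x j)) - Q j (x j) + Q j y"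
    unfolding x'_def by (rule sum_upd[OF j])
  have V': "(\<Sum>j<m. t j * x' j) = (\<Sum>j<m. t j * x j) - t j * x j + t j * y"
    unfolding x'_def using sum_upd[OF j, of "\<lambda>j v. t j * v"] by simp
  have x'F: "x' \<in> feasible (\<lambda>x. \<Sum>j<m. Q j (x j)) m b"
    using x'c Qy P' unfolding feasible_def by auto
  have "(\<Sum>j<m. t j * x' j) - (\<Sum>j<m. Q j (x' j)) \<le> ustar (\<lambda>x. \<Sum>j<m. Q j (x j)) (\<lambda>x. \<Sum>j<m. t j * x j) m b"
    unfolding ustar_def using cSUP_upper[OF x'F ustar_bdd[OF nn]] by simp
  also have "\<dots> = (\<Sum>j<m. t j * x j) - (\<Sum>j<m. Q j (x j))" using x by (simp add: Dem_def)
  finally show ?thesis using P' V' by simp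
qed

lemma (in pfun) p_max: "\<exists>s\<in>{0..1}. \<forall>y\<in>{0..1}. \<tau> * y - p y \<le> \<tau> * s - p s"
proof -
  have p1: "0 \<le> p 1" using pnn by auto
  have "Dem (\<lambda>x. \<Sum>j<1. (\<lambda>_. p) j (x j)) (\<lambda>x. \<Sum>j<1. (\<lambda>_. \<tau>) j * x j) 1 (p 1) \<noteq> {}"
    by (rule Dem_nonempty) (use lsc_eps pnn p0 p1 in auto)
  then obtain x where x: "x \<in> Dem (\<lambda>x. \<Sum>j<1. (\<lambda>_. p) j (x j)) (\<lambda>x. \<Sum>j<1. (\<lambda>_. \<tau>) j * x j) 1 (p 1)"
    by blast
  have x0: "x 0 \<in> {0..1}" using x by (auto simp: Dem_def feasible_def cube_def)
  show ?thesis
  proof (intro bexI[OF _ x0] ballI)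
    fix y :: real assume y: "y \<in> {0..1}"
    have "(\<Sum>j<1. (\<lambda>_. p) j (x j)) - (\<lambda>_. p) 0 (x 0) + (\<lambda>_. p) 0 y \<le> p 1"
      using y pmono by (auto elim!: mono_onD)
    from Dem_coord[OF x _ y this] pnn show "\<tau> * y - p y \<le> \<tau> * x 0 - p (x 0)" by auto
  qed
qed

lemma conv01: "a \<in> {0..1} \<Longrightarrow> c \<in> {0..1} \<Longrightarrow> s \<in> {0..1} \<Longrightarrow> (1 - s) * a + s * c \<in> {0..1::real}"
proof -
  assume a: "a \<in> {0..1}" and c: "c \<in> {0..1}" and s: "s \<in> {0..1}"
  have "(1 - s) * a \<le> 1 - s" "s * c \<le> s" using a c s by (auto intro: mult_left_le)
  moreover have "0 \<le> (1 - s) * a" "0 \<le> s * c" using a c s by auto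
  ultimately show ?thesis by auto
qed

lemma revenue_main:
  fixes p phat :: "nat \<Rightarrow> real \<Rightarrow> real" and \<tau> :: "nat \<Rightarrow> real"
  assumes pf: "\<forall>j<m. pfun (p j)"
    and hp: "\<forall>j<m. continuous_on {0..1} (phat j) \<and> convex_on {0..1} (phat j) \<and> phat j 0 = 0
              \<and> (\<forall>x\<in>{0..1}. 0 \<le> phat j x)"
    and key: "\<forall>j<m. \<exists>t\<in>{0..1}. (\<forall>y\<in>{0..1}. \<tau> j * y - phat j y \<le> \<tau> j * t - phat j t) \<and>
       (\<forall>s\<in>{0..1}. (\<forall>y\<in>{0..1}. \<tau> j * y - p j y \<le> \<tau> j * s - p j s) \<longrightarrow> p j s \<le> phat j t)"
    and b: "0 \<le> b"
  shows "revenue (\<lambda>x. \<Sum>j<m. phat j (x j)) (\<lambda>x. \<Sum>j<m. \<tau> j * x j) m b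
       \<ge> revenue (\<lambda>x. \<Sum>j<m. p j (x j)) (\<lambda>x. \<Sum>j<m. \<tau> j * x j) m b"
proof -
  define P where "P = (\<lambda>x::nat \<Rightarrow> real. \<Sum>j<m. p j (x j))"
  define H where "H = (\<lambda>x::nat \<Rightarrow> real. \<Sum>j<m. phat j (x j))"
  define V where "V = (\<lambda>x::nat \<Rightarrow> real. \<Sum>j<m. \<tau> j * x j)"
  have "\<forall>j. \<exists>t. j < m \<longrightarrow> t \<in> {0..1} \<and> (\<forall>y\<in>{0..1}. \<tau> j * y - phat j y \<le> \<tau> j * t - phat j t) \<and>
       (\<forall>s\<in>{0..1}. (\<forall>y\<in>{0..1}. \<tau> j * y - p j y \<le> \<tau> j * s - p j s) \<longrightarrow> p j s \<le> phat j t)"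
    using key by blast
  then obtain T where T: "\<And>j. j < m \<Longrightarrow> T j \<in> {0..1} \<and> (\<forall>y\<in>{0..1}. \<tau> j * y - phat j y \<le> \<tau> j * T j - phat j (T j)) \<and>
       (\<forall>s\<in>{0..1}. (\<forall>y\<in>{0..1}. \<tau> j * y - p j y \<le> \<tau> j * s - p j s) \<longrightarrow> p j s \<le> phat j (T j))"
    by metis
  define t where "t j = (if j < m then T j else 0)" for j
  have tc: "t \<in> cube m" using T unfolding t_def cube_def by auto
  have Ht: "H t = (\<Sum>j<m. phat j (T j))" unfolding H_def t_def by (rule sum.cong) auto
  have Vt: "V t = (\<Sum>j<m. \<tau> j * T j)" unfolding V_def t_def by (rule sum.cong) auto
  have pnnA: "\<forall>j<m. \<forall>x\<in>{0..1}. 0 \<le> p j x" using pf pfun.pnn by blast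
  have hnn: "\<forall>j<m. \<forall>x\<in>{0..1}. 0 \<le> phat j x" using hp by blast
  have lscP: "\<forall>j<m. \<forall>xh\<in>{0..1}. \<forall>e>0. \<exists>d>0. \<forall>x\<in>{0..1}. \<bar>x - xh\<bar> \<le> d \<longrightarrow> p j xh - e < p j x"
    using pf pfun.lsc_eps by blast
  have lscH: "\<forall>j<m. \<forall>xh\<in>{0..1}. \<forall>e>0. \<exists>d>0. \<forall>x\<in>{0..1}. \<bar>x - xh\<bar> \<le> d \<longrightarrow> phat j xh - e < phat j x"
  proof (intro allI impI ballI)
    fix j and xh e :: real assume j: "j < m" and xh: "xh \<in> {0..1}" and e: "0 < e"
    have "continuous_on {0..1} (phat j)" using hp j by blast
    then obtain d where d: "d > 0" "\<forall>x\<in>{0..1}. dist x xh < d \<longrightarrow> dist (phat j x) (phat j xh) < e"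
      using xh e unfolding continuous_on_iff by blast
    show "\<exists>d>0. \<forall>x\<in>{0..1}. \<bar>x - xh\<bar> \<le> d \<longrightarrow> phat j xh - e < phat j x"
    proof (intro exI[of _ "d / 2"] conjI ballI impI)
      show "0 < d / 2" using d by simp
      fix x assume "x \<in> {0..1}" "\<bar>x - xh\<bar> \<le> d / 2"
      then have "dist (phat j x) (phat j xh) < e" using d by (auto simp: dist_real_def)
      then show "phat j xh - e < phat j x" by (simp add: dist_real_def abs_less_iff)
    qed
  qed
  have p0: "\<forall>j<m. p j 0 = 0" using pf pfun.p0 by blast
  have h0: "\<forall>j<m. phat j 0 = 0" using hp by blast
  have DemP: "Dem P V m b \<noteq> {}" unfolding P_def V_def by (rule Dem_nonempty[OF lscP pnnA p0 b])
  have DemH: "Dem H V m b \<noteq> {}" unfolding H_def V_def by (rule Dem_nonempty[OF lscH hnn h0 b])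
  have bddH: "bdd_above ((\<lambda>x. V x - H x) ` feasible H m b)"
    unfolding H_def V_def by (rule ustar_bdd[OF hnn])
  have claimA: "P x \<le> H t" if x: "x \<in> Dem P V m b" for x
  proof -
    have xc: "x \<in> cube m" and xb: "P x \<le> b" using x by (auto simp: Dem_def feasible_def)
    have "p j (x j) \<le> phat j (T j)" if j: "j < m" for j
    proof -
      interpret pfun "p j" using pf j by blast
      have xj: "x j \<in> {0..1}" using xc j by (auto simp: cube_def)
      obtain s where s: "s \<in> {0..1}" "\<forall>y\<in>{0..1}. \<tau> j * y - p j y \<le> \<tau> j * s - p j s"
        using p_max by blast
      show ?thesis
      proof (cases "s \<le> x j")
        case True
        have "p j s \<le> p j (x j)" using pmono True s xj by (auto elim!: mono_onD)
        then have "P x - p j (x j) + p j s \<le> b" using xb by simp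
        then have "\<tau> j * s - p j s \<le> \<tau> j * x j - p j (x j)"
          using Dem_coord[where x=x and Q=p and t=\<tau> and m=m and b=b and j=j and y=s] x j s pnnA unfolding P_def V_def by blast
        then have "\<forall>y\<in>{0..1}. \<tau> j * y - p j y \<le> \<tau> j * x j - p j (x j)" using s by force
        then show ?thesis using T[OF j] xj by blast
      next
        case False
        have "p j (x j) \<le> p j s" using pmono False s xj by (auto elim!: mono_onD)
        also have "p j s \<le> phat j (T j)" using T[OF j] s by blast
        finally show ?thesis .
      qed
    qed
    then have "P x \<le> (\<Sum>j<m. phat j (T j))" unfolding P_def by (intro sum_mono) auto
    then show ?thesis using Ht by simp
  qed
  have revP_b: "revenue P V m b \<le> b"
    unfolding revenue_def by (rule cSUP_least[OF DemP]) (auto simp: Dem_def feasible_def)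
  have revP_t: "revenue P V m b \<le> H t"
    unfolding revenue_def by (rule cSUP_least[OF DemP]) (use claimA in auto)
  have bddRH: "bdd_above (H ` Dem H V m b)"
    by (rule bdd_aboveI[where M=b]) (auto simp: Dem_def feasible_def)
  have Umax: "V x - H x \<le> V t - H t" if xc: "x \<in> cube m" for x
  proof -
    have "V x - H x = (\<Sum>j<m. \<tau> j * x j - phat j (x j))" unfolding V_def H_def by (simp add: sum_subtractf)
    also have "\<dots> \<le> (\<Sum>j<m. \<tau> j * T j - phat j (T j))"
      by (rule sum_mono) (use T xc in \<open>auto simp: cube_def\<close>)
    also have "\<dots> = V t - H t" using Ht Vt by (simp add: sum_subtractf)
    finally show ?thesis .
  qed
  show ?thesis
  proof (cases "H t \<le> b")
    case True
    have tF: "t \<in> feasible H m b" using tc True by (simp add: feasible_def)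
    have us: "ustar H V m b = V t - H t"
      unfolding ustar_def
    proof (rule antisym)
      show "(SUP x\<in>feasible H m b. V x - H x) \<le> V t - H t"
        by (rule cSUP_least) (use tF Umax in \<open>auto simp: feasible_def\<close>)
      show "V t - H t \<le> (SUP x\<in>feasible H m b. V x - H x)" by (rule cSUP_upper[OF tF bddH])
    qed
    have tD: "t \<in> Dem H V m b" using tF us by (simp add: Dem_def)
    have "H t \<le> revenue H V m b" unfolding revenue_def by (rule cSUP_upper[OF tD bddRH])
    then show ?thesis using revP_t unfolding P_def H_def V_def by simp
  next
    case False
    then have Htb: "b < H t" by simp
    obtain xs where xs: "xs \<in> Dem H V m b" using DemH by blast
    have xsc: "xs \<in> cube m" and xsb: "H xs \<le> b" and xsu: "V xs - H xs = ustar H V m b"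
      using xs by (auto simp: Dem_def feasible_def)
    define y where "y s = (\<lambda>j. (1 - s) * xs j + s * t j)" for s :: real
    define g where "g s = H (y s)" for s
    have yc: "y s \<in> cube m" if s: "s \<in> {0..1}" for s
      using xsc tc s conv01 unfolding y_def cube_def by auto
    have gc: "continuous_on {0..1} g"
      unfolding g_def H_def y_def
    proof (intro continuous_on_sum)
      fix j assume j: "j \<in> {..<m}"
      have "continuous_on {0..1} (phat j)" using hp j by blast
      moreover have "continuous_on {0..1} (\<lambda>s::real. (1 - s) * xs j + s * t j)"
        by (intro continuous_intros)
      moreover have "(\<lambda>s::real. (1 - s) * xs j + s * t j) ` {0..1} \<subseteq> {0..1}"
        using xsc tc j conv01 by (auto simp: cube_def)
      ultimately show "continuous_on {0..1} (\<lambda>s. phat j ((1 - s) * xs j + s * t j))"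
        by (rule continuous_on_compose2)
    qed
    have g0: "g 0 = H xs" unfolding g_def y_def by simp
    have g1: "g 1 = H t" unfolding g_def y_def by simp
    obtain s0 where s0: "0 \<le> s0" "s0 \<le> 1" "g s0 = b"
      using IVT'[of g 0 b 1] gc g0 g1 xsb Htb by auto
    have s01: "s0 \<in> {0..1}" using s0 by auto
    have yF: "y s0 \<in> feasible H m b" using yc[OF s01] s0 unfolding feasible_def g_def by auto
    have "V xs - H xs \<le> V (y s0) - H (y s0)"
    proof -
      have "V xs - H xs = (\<Sum>j<m. \<tau> j * xs j - phat j (xs j))" unfolding V_def H_def by (simp add: sum_subtractf)
      also have "\<dots> \<le> (\<Sum>j<m. \<tau> j * y s0 j - phat j (y s0 j))"
      proof (rule sum_mono)
        fix j assume j: "j \<in> {..<m}"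
        have a: "xs j \<in> {0..1}" and tj: "t j = T j" and T01: "T j \<in> {0..1}"
          using xsc T j by (auto simp: cube_def t_def)
        have cvx: "phat j ((1 - s0) * xs j + s0 * T j) \<le> (1 - s0) * phat j (xs j) + s0 * phat j (T j)"
          using convex_onD[of "{0..1}" "phat j" s0 "xs j" "T j"] hp j s0 a T01 by auto
        have opt: "\<tau> j * xs j - phat j (xs j) \<le> \<tau> j * T j - phat j (T j)" using T j a by auto
        have "\<tau> j * xs j - phat j (xs j) \<le> (1 - s0) * (\<tau> j * xs j - phat j (xs j)) + s0 * (\<tau> j * T j - phat j (T j))"
        proof -
          have "s0 * (\<tau> j * xs j - phat j (xs j)) \<le> s0 * (\<tau> j * T j - phat j (T j))"
            using opt s0 by (intro mult_left_mono) auto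
          moreover have "(1 - s0) * (\<tau> j * xs j - phat j (xs j)) = (\<tau> j * xs j - phat j (xs j)) - s0 * (\<tau> j * xs j - phat j (xs j))"
            by (simp add: algebra_simps)
          ultimately show ?thesis by linarith
        qed
        also have "\<dots> \<le> \<tau> j * ((1 - s0) * xs j + s0 * T j) - phat j ((1 - s0) * xs j + s0 * T j)"
          using cvx by (simp add: algebra_simps)
        finally show "\<tau> j * xs j - phat j (xs j) \<le> \<tau> j * y s0 j - phat j (y s0 j)"
          unfolding y_def tj by simp
      qed
      also have "\<dots> = V (y s0) - H (y s0)" unfolding V_def H_def by (simp add: sum_subtractf)
      finally show ?thesis .
    qed
    moreover have "V (y s0) - H (y s0) \<le> ustar H V m b"
      unfolding ustar_def by (rule cSUP_upper[OF yF bddH])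
    ultimately have "y s0 \<in> Dem H V m b" using yF xsu by (auto simp: Dem_def)
    then have "H (y s0) \<le> revenue H V m b" unfolding revenue_def by (rule cSUP_upper[OF _ bddRH])
    then have "b \<le> revenue H V m b" using s0 unfolding g_def by simp
    then show ?thesis using revP_b unfolding P_def H_def V_def by simp
  qed
qed



theorem mainTheorem2:
  fixes n m :: nat and b :: "nat \<Rightarrow> real" and \<tau> :: "nat \<Rightarrow> nat \<Rightarrow> real"
    and p :: "nat \<Rightarrow> real \<Rightarrow> real" and phat :: "nat \<Rightarrow> real \<Rightarrow> real"
  assumes n_pos: "0 < n"
    and b_nonneg: "\<forall>i<n. 0 \<le> b i"
    and tau_nonneg: "\<forall>i<n. \<forall>j<m. 0 \<le> \<tau> i j"
    and p_mono: "\<forall>j<m. mono_on {0..1} (p j)"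
    and p_zero: "\<forall>j<m. p j 0 = 0"
    and p_nonneg: "\<forall>j<m. \<forall>x\<in>{0..1}. 0 \<le> p j x"
    and p_lc: "\<forall>j<m. lower_cont (p j)"
    and phat_def: "phat = (\<lambda>j. disc (convf (p j)) {\<tau> i j | i. i < n})"
  shows "(\<forall>i<n. revenue (\<lambda>x. \<Sum>j<m. phat j (x j)) (\<lambda>x. \<Sum>j<m. \<tau> i j * x j) m (b i)
              \<ge> revenue (\<lambda>x. \<Sum>j<m. p j (x j)) (\<lambda>x. \<Sum>j<m. \<tau> i j * x j) m (b i))
       \<and> (\<forall>j<m. mono_on {0..1} (phat j) \<and> continuous_on {0..1} (phat j)
              \<and> convex_on {0..1} (phat j) \<and> piecewise_linear (phat j))"
proof -
  define S where "S j = {\<tau> i j | i. i < n}" for j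
  have Sim: "S j = (\<lambda>i. \<tau> i j) ` {..<n}" for j unfolding S_def by auto
  have pf: "pfun (p j)" if j: "j < m" for j
    by unfold_locales (use p_mono p_zero p_nonneg p_lc j in auto)
  have ds: "dset (p j) (S j)" if j: "j < m" for j
  proof -
    interpret pfun "p j" by (rule pf[OF j])
    show ?thesis
    proof unfold_locales
      show "finite (S j)" unfolding Sim by simp
      show "S j \<noteq> {}" unfolding Sim using n_pos by auto
      show "\<forall>a\<in>S j. 0 \<le> a" unfolding Sim using tau_nonneg j by auto
    qed
  qed
  have ph: "phat j = disc (convf (p j)) (S j)" for j using phat_def S_def by simp
  have A: "\<forall>i<n. revenue (\<lambda>x. \<Sum>j<m. phat j (x j)) (\<lambda>x. \<Sum>j<m. \<tau> i j * x j) m (b i)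
              \<ge> revenue (\<lambda>x. \<Sum>j<m. p j (x j)) (\<lambda>x. \<Sum>j<m. \<tau> i j * x j) m (b i)"
  proof (intro allI impI)
    fix i assume i: "i < n"
    show "revenue (\<lambda>x. \<Sum>j<m. phat j (x j)) (\<lambda>x. \<Sum>j<m. \<tau> i j * x j) m (b i)
              \<ge> revenue (\<lambda>x. \<Sum>j<m. p j (x j)) (\<lambda>x. \<Sum>j<m. \<tau> i j * x j) m (b i)"
    proof (rule revenue_main)
      show "\<forall>j<m. pfun (p j)" using pf by blast
      show "\<forall>j<m. continuous_on {0..1} (phat j) \<and> convex_on {0..1} (phat j) \<and> phat j 0 = 0
              \<and> (\<forall>x\<in>{0..1}. 0 \<le> phat j x)"
        using dset.coord1[OF ds] dset.coord0[OF ds] ph by auto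
      show "\<forall>j<m. \<exists>t\<in>{0..1}. (\<forall>y\<in>{0..1}. \<tau> i j * y - phat j y \<le> \<tau> i j * t - phat j t) \<and>
       (\<forall>s\<in>{0..1}. (\<forall>y\<in>{0..1}. \<tau> i j * y - p j y \<le> \<tau> i j * s - p j s) \<longrightarrow> p j s \<le> phat j t)"
      proof (intro allI impI)
        fix j assume j: "j < m"
        have "\<tau> i j \<in> S j" using i unfolding S_def by auto
        from dset.coord2[OF ds[OF j] this] show "\<exists>t\<in>{0..1}. (\<forall>y\<in>{0..1}. \<tau> i j * y - phat j y \<le> \<tau> i j * t - phat j t) \<and>
       (\<forall>s\<in>{0..1}. (\<forall>y\<in>{0..1}. \<tau> i j * y - p j y \<le> \<tau> i j * s - p j s) \<longrightarrow> p j s \<le> phat j t)"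
          unfolding ph .
      qed
      show "0 \<le> b i" using b_nonneg i by auto
    qed
  qed
  have B: "\<forall>j<m. mono_on {0..1} (phat j) \<and> continuous_on {0..1} (phat j)
              \<and> convex_on {0..1} (phat j) \<and> piecewise_linear (phat j)"
  proof (intro allI impI)
    fix j assume j: "j < m"
    show "mono_on {0..1} (phat j) \<and> continuous_on {0..1} (phat j)
              \<and> convex_on {0..1} (phat j) \<and> piecewise_linear (phat j)"
      using dset.coord1[OF ds[OF j]] unfolding ph .
  qed
  show ?thesis using A B by blast
qed


end
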